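(* Let $p$ be an odd prime, $V_p=\{2^{n-1}p^m:n,m\in\mathbb{N}\}$, and let $\mathcal{E}_p$ be the set of two-element subsets $E\subseteq V_p$ with $A_E=\{2,p\}$. (1) If $p=3$, then $\mathcal{E}_3$ consists exactly of the doubletons $\{2^{a-1}3^b,2^{a-1}3^{b+1}\}$, $\{2^{a-1}3^b,2^{a-1}3^{b+2}\}$, $\{2^{a-1}3^b,2^{a}3^{b}\}$, $\{2^{a-1}3^b,2^{a+1}3^{b}\}$, $\{2^{a-1}3^{b+1},2^{a+1}3^b\}$, $\{2^{a}3^{b},2^{a-1}3^{b+1}\}$, $\{2^{a+2}3^b,2^{a-1}3^{b+2}\}$ for $a,b\in\mathbb{N}$. (2) If $p=2^m+1>3$ is a Fermat prime, then $\mathcal{E}_p=\big\{\{2^{a-1}p^b,2^{a-1}p^{b+1}\},\{2^{a-1}p^b,2^{a}p^b\},\{2^{m+a-1}p^{b},2^{a-1}p^{b+1}\}:a,b\in\mathbb{N}\big\}$. (3) If $p=2^m-1>3$ is a Mersenne prime, then $\mathcal{E}_p=\big\{\{2^{a-1}p^b,2^{a}p^b\},\{2^{a-1}p^b,2^{m+a-1}p^b\},\{2^{a-1}p^{b+1},2^{m+a-1}p^b\}:a,b\in\mathbb{N}\big\}$. (4) If $p$ is neither a Fermat prime nor a Mersenne prime, then $\mathcal{E}_p=\big\{\{2^ap^b,2^{a-1}p^b\}:a,b\in\mathbb{N}\big\}$.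
   Context: $\mathbb{N}=\{1,2,\dots\}$, $\Pi$ the set of primes. For a nonempty finite $E\subseteq\mathbb{N}$, $A_E=\{q\in\Pi:\exists k\in\mathbb{N}\ (E\subseteq q\mathbb{Z}\cup(k+q\mathbb{Z}))\}$. A prime $p$ is a Fermat prime if $p=2^n+1$ for some $n\in\mathbb{N}$, and a Mersenne prime if $p=2^n-1$ for some $n\in\mathbb{N}$. *)

theory Defs
  imports "HOL-Computational_Algebra.Primes"
begin

text \<open>Positive naturals are represented by nat with explicit positivity guards.\<close>

definition A_set :: "nat set \<Rightarrow> nat set" where
  "A_set E = {q. prime q \<and> (\<exists>k::nat. k \<ge> 1 \<and>
       (\<forall>e\<in>E. q dvd e \<or> e mod q = k mod q))}"

definition fermat_prime :: "nat \<Rightarrow> bool" where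
  "fermat_prime p \<longleftrightarrow> prime p \<and> (\<exists>n\<ge>1. p = 2 ^ n + 1)"

definition mersenne_prime :: "nat \<Rightarrow> bool" where
  "mersenne_prime p \<longleftrightarrow> prime p \<and> (\<exists>n\<ge>1. p = 2 ^ n - 1)"

definition V_set :: "nat \<Rightarrow> nat set" where
  "V_set p = {2 ^ (n - 1) * p ^ m | n m. n \<ge> 1 \<and> m \<ge> 1}"

definition E_fam :: "nat \<Rightarrow> nat set set" where
  "E_fam p = {E. E \<subseteq> V_set p \<and> card E = 2 \<and> A_set E = {2, p}}"

end

theory Submission
  imports Defs
begin
lemma pow_form: "\<exists>Q. (Suc y)^j = 1 + y*Q"
proof (induction j)
  case 0 then show ?case by (intro exI[of _ 0]) simp
next
  case (Suc j)
  then obtain Q where "(Suc y)^j = 1 + y*Q" by blast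
  then have "(Suc y)^Suc j = 1 + y * (1 + Suc y * Q)" by (simp add: algebra_simps)
  then show ?case by blast
qed

lemma odd_dvd_pow2: "(R::nat) dvd 2^a \<Longrightarrow> odd R \<Longrightarrow> R = 1"
proof -
  assume "R dvd 2^a" "odd R"
  then obtain i where "R = 2^i" using divides_primepow_nat[OF two_is_prime_nat] by blast
  then show "R = 1" using \<open>odd R\<close> by (cases i) auto
qed

lemma lemM:
  assumes p: "prime (p::nat)" "odd p" and t: "t \<ge> 1" and e: "p^t + 1 = 2^al"
  shows "t = 1"
proof -
  have p3: "p \<ge> 3" using p by (metis One_nat_def dvd_refl le_less_Suc_eq not_less_eq_eq numeral_3_eq_3 prime_ge_2_nat prime_nat_iff two_is_prime_nat le_antisym Suc_1 linorder_not_le)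
  show ?thesis
  proof (cases "even t")
    case True
    then obtain j where tj: "t = 2*j" by blast
    have "odd (p^j)" using p by simp
    then obtain i where i: "p^j = 2*i+1" by (metis oddE)
    have "p^t = (p^j)^2" using tj by (simp add: power_mult[symmetric] mult.commute)
    then have eq: "2^al = 4*(i*i+i) + 2" using e i by (simp add: power2_eq_square algebra_simps)
    have "p^t \<ge> 3" using p3 t by (metis dual_order.trans le_add1 power_increasing power_one_right le_add_diff_inverse add_leD1 power_one_right one_le_numeral)
    then have "2^al \<ge> (2::nat)^2" using e by simp
    then have "al \<ge> 2" by (metis power_le_imp_le_exp one_less_numeral_iff semiring_norm(76))
    then have "(4::nat) dvd 2^al" by (metis le_imp_power_dvd power2_eq_square numeral_Bit0_eq_double mult_2 numeral_times_numeral semiring_norm(12))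
    then have "(4::nat) dvd 4*(i*i+i) + 2" using eq by simp
    then have "(4::nat) dvd 2" by (metis dvd_add_right_iff dvd_triv_left)
    then show ?thesis by simp
  next
    case False
    then obtain j where tj: "t = 2*j+1" by (metis oddE)
    obtain r where r: "p = Suc r" using p3 by (cases p) auto
    have "p^2 = Suc (r*(r+2))" using r by (simp add: power2_eq_square algebra_simps)
    then obtain Q where Q: "(p^2)^j = 1 + r*(r+2)*Q" using pow_form by metis
    have "p^t = p * (p^2)^j" using tj by (simp add: power_mult[symmetric] mult.commute)
    then have "2^al = (r+2) * (1 + p*r*Q)" using e Q r by (simp add: algebra_simps)
    then have "(1 + p*r*Q) dvd 2^al" by (metis dvd_triv_right)
    moreover have "odd (1 + p*r*Q)" using p r by simp
    ultimately have "1 + p*r*Q = 1" using odd_dvd_pow2 by blast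
    then have "Q = 0" using p3 r by simp
    then have "(p^2)^j = 1" using Q by simp
    then have "j = 0" using p3 by (auto simp: nat_power_eq_Suc_0_iff power2_eq_square)
    then show ?thesis using tj by simp
  qed
qed

lemma two_pows_diff2: "(2::nat)^u + 2 = 2^w \<Longrightarrow> u = 1"
proof -
  assume e: "(2::nat)^u + 2 = 2^w"
  show "u = 1"
  proof (rule ccontr)
    assume "u \<noteq> 1"
    then consider "u = 0" | "u \<ge> 2" by linarith
    then show False
    proof cases
      case 1
      then have "(2::nat)^w = 3" using e by simp
      have w0: "w \<noteq> 0" proof assume "w = 0" then show False using \<open>(2::nat)^w = 3\<close> by simp qed
      have "even ((2::nat)^w)" using w0 by simp
      then show False unfolding \<open>(2::nat)^w = 3\<close> by simp
    next
      case 2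
      then have "(4::nat) dvd 2^u" by (metis le_imp_power_dvd power2_eq_square numeral_Bit0_eq_double mult_2 numeral_times_numeral semiring_norm(12))
      have "(2::nat)^u \<ge> 2^2" using 2 by (rule power_increasing) simp
      then have "(2::nat)^w \<ge> 2^2" using e by simp
      then have "w \<ge> 2" by (metis power_le_imp_le_exp one_less_numeral_iff semiring_norm(76))
      then have "(4::nat) dvd 2^w" by (metis le_imp_power_dvd power2_eq_square numeral_Bit0_eq_double mult_2 numeral_times_numeral semiring_norm(12))
      then have "(4::nat) dvd 2^u + 2" using e by simp
      then have "(4::nat) dvd 2" using \<open>4 dvd 2^u\<close> by (metis dvd_add_right_iff)
      then show False by simp
    qed
  qed
qed

lemma p_ge3: "prime (p::nat) \<Longrightarrow> odd p \<Longrightarrow> p \<ge> 3"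
  by (metis One_nat_def le_antisym not_less_eq_eq numeral_3_eq_3 prime_ge_2_nat Suc_1 even_numeral)

lemma lemF:
  assumes p: "prime (p::nat)" "odd p" and b: "be \<ge> 1" and e: "p^be = 2^s + 1"
  shows "be = 1 \<or> (p = 3 \<and> be = 2 \<and> s = 3)"
proof -
  have p3: "p \<ge> 3" using p p_ge3 by blast
  show ?thesis
  proof (cases "even be")
    case True
    then obtain j where tj: "be = 2*j" by blast
    have j1: "j \<ge> 1" using tj b by simp
    have w3: "p^j \<ge> 3" using p3 j1 by (metis dual_order.trans power_increasing power_one_right le_numeral_extra(2) one_le_numeral order.trans[OF _ p3] zero_less_one)
    obtain v where v: "p^j = Suc v" using w3 by (cases "p^j") auto
    have "p^be = (p^j)^2" using tj by (simp add: power_mult[symmetric] mult.commute)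
    then have "v * (v+2) = 2^s" using e v by (simp add: power2_eq_square algebra_simps)
    then have d1: "v dvd 2^s" and d2: "(v+2) dvd 2^s" by (metis dvd_triv_left, metis dvd_triv_right)
    obtain u where u: "v = 2^u" using d1 divides_primepow_nat[OF two_is_prime_nat] by blast
    obtain w where w: "v + 2 = 2^w" using d2 divides_primepow_nat[OF two_is_prime_nat] by blast
    have "u = 1" using two_pows_diff2[of u w] u w by simp
    then have pj: "p^j = 3" using u v by simp
    have "p dvd 3" using pj j1 by (metis dvd_power order.strict_trans2 zero_less_one j1 less_one not_less dvd_def)
    then have p3e: "p = 3" using p3 by (metis dvd_imp_le le_antisym zero_less_numeral)
    then have "j = 1" using pj by (metis power_inject_exp power_one_right one_less_numeral_iff semiring_norm(77))
    then have "be = 2" using tj by simp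
    then have "(2::nat)^s = 2^3" using e p3e by simp
    then have "s = 3" by (metis power_inject_exp one_less_numeral_iff semiring_norm(76))
    then show ?thesis using p3e \<open>be = 2\<close> by simp
  next
    case False
    then obtain j where tj: "be = 2*j+1" by (metis oddE)
    obtain r where r: "p = Suc r" using p3 by (cases p) auto
    have "p^2 = Suc (r*(r+2))" using r by (simp add: power2_eq_square algebra_simps)
    then obtain Q where Q: "(p^2)^j = 1 + r*(r+2)*Q" using pow_form by metis
    have "p^be = p * (p^2)^j" using tj by (simp add: power_mult[symmetric] mult.commute)
    then have "2^s = r * (1 + p*(r+2)*Q)" using e Q r by (simp add: algebra_simps)
    then have "(1 + p*(r+2)*Q) dvd 2^s" by (metis dvd_triv_right)
    moreover have "odd (1 + p*(r+2)*Q)" using p r by simp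
    ultimately have "1 + p*(r+2)*Q = 1" using odd_dvd_pow2 by blast
    then have "Q = 0" using p3 r by simp
    then have "(p^2)^j = 1" using Q by simp
    then have "j = 0" using p3 by (auto simp: nat_power_eq_Suc_0_iff power2_eq_square)
    then show ?thesis using tj by simp
  qed
qed

definition good :: "nat \<Rightarrow> nat \<Rightarrow> bool" where
  "good p n \<longleftrightarrow> n > 0 \<and> (\<forall>q. prime q \<longrightarrow> q dvd n \<longrightarrow> q = 2 \<or> q = p)"

lemma good_dvd: "good p n \<Longrightarrow> m dvd n \<Longrightarrow> good p m"
  unfolding good_def by (metis dvd_trans dvd_0_left_iff gr0I)

lemma only_prime_pow:
  assumes "prime r" shows "(n::nat) > 0 \<Longrightarrow> (\<forall>q. prime q \<longrightarrow> q dvd n \<longrightarrow> q = r) \<Longrightarrow> \<exists>t. n = r^t"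
proof (induction n rule: less_induct)
  case (less n)
  show ?case
  proof (cases "n = 1")
    case True then show ?thesis by (intro exI[of _ 0]) simp
  next
    case False
    then obtain q where q: "prime q" "q dvd n" using prime_factor_nat by blast
    then have qr: "q = r" using less.prems by blast
    then obtain n' where n': "n = r * n'" using q by blast
    have r2: "r \<ge> 2" using assms prime_ge_2_nat by blast
    have "n' > 0" using n' less.prems by simp
    moreover have "n' < n" using n' r2 \<open>n' > 0\<close> by simp
    moreover have "\<forall>q. prime q \<longrightarrow> q dvd n' \<longrightarrow> q = r" using less.prems n' by auto
    ultimately obtain t where "n' = r^t" using less.IH by blast
    then show ?thesis using n' by (intro exI[of _ "Suc t"]) simp
  qed
qed

lemma good_odd: "good p n \<Longrightarrow> prime p \<Longrightarrow> odd n \<Longrightarrow> \<exists>t. n = p^t"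
  unfolding good_def using only_prime_pow[of p n] by (metis dvd_trans)

lemma good_ndvd: "good p n \<Longrightarrow> \<not> p dvd n \<Longrightarrow> \<exists>s. n = 2^s"
  unfolding good_def using only_prime_pow[OF two_is_prime_nat, of n] by metis

lemma good_one: "good p n \<Longrightarrow> prime p \<Longrightarrow> odd n \<Longrightarrow> \<not> p dvd n \<Longrightarrow> n = 1"
  using good_odd by (metis dvd_power not_gr0 power_0)

lemma good_pow: assumes p: "prime p" shows "good p (2^s * p^t)"
  unfolding good_def
proof (intro conjI allI impI)
  show "0 < 2^s * p^t" using p by (simp add: prime_gt_0_nat)
next
  fix q :: nat assume q: "prime q" "q dvd 2^s * p^t"
  then have "q dvd 2^s \<or> q dvd p^t" using prime_dvd_mult_iff by blast
  then have "q dvd 2 \<or> q dvd p" using q prime_dvd_power by blast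
  then show "q = 2 \<or> q = p" using q p primes_dvd_imp_eq two_is_prime_nat by blast
qed

lemma dvd_sub1: "(p::nat) dvd X \<Longrightarrow> X \<ge> 1 \<Longrightarrow> p \<ge> 2 \<Longrightarrow> \<not> p dvd (X - 1)"
proof
  assume a: "p dvd X" "X \<ge> 1" "p \<ge> 2" "p dvd (X - 1)"
  then have "p dvd X - (X - 1)" using dvd_diff_nat by blast
  moreover have "X - (X - 1) = 1" using a by simp
  ultimately show False using a by simp
qed

lemma NA:
  assumes p: "prime p" "odd p" and g: "good p (2^al*p^be - 1)" and gt: "2^al*p^be > (1::nat)"
  shows "(al=1 \<and> be=0) \<or> (be=0 \<and> al \<ge> 2 \<and> p = 2^al - 1) \<or> (al=0 \<and> be=1 \<and> (\<exists>k\<ge>1. p = 2^k+1)) \<or> (al=0 \<and> be=2 \<and> p=3)"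
proof -
  have p3: "p \<ge> 3" using p p_ge3 by blast
  consider "al \<ge> 1" "be \<ge> 1" | "al \<ge> 1" "be = 0" | "al = 0" "be \<ge> 1" | "al = 0" "be = 0" by linarith
  then show ?thesis
  proof cases
    case 1
    define X where "X = 2^al*p^be"
    have ev: "even X" using 1 unfolding X_def by simp
    obtain Y where XY: "X = Suc Y" using gt unfolding X_def by (cases "2^al*p^be") auto
    have od: "odd (X - 1)" using ev XY by simp
    have "p dvd X" using 1 unfolding X_def by (simp add: dvd_power)
    then have nd: "\<not> p dvd (X - 1)" using XY p3 dvd_sub1[of p X] by simp
    have gX: "good p (X - 1)" using g unfolding X_def .
    have "X - 1 = 1" using good_one[OF gX p(1) od nd] .
    then have X2: "X = 2" by simp
    have "p^be \<ge> p^1" using 1 p3 by (intro power_increasing) auto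
    moreover have "(2::nat)^al \<ge> 2^1" using 1 by (intro power_increasing) auto
    ultimately have "2^1 * p^1 \<le> (2::nat)^al * p^be" by (intro mult_le_mono)
    then have "2 * p \<le> (2::nat)" using X2 unfolding X_def by simp
    then have False using p3 by simp
    then show ?thesis ..
  next
    case 2
    then have od: "odd (2^al - 1::nat)" using gt by (simp add: even_diff_nat)
    have g2: "good p (2^al - 1)" using g 2 by simp
    obtain t where t: "2^al - 1 = p^t" using good_odd[OF g2 p(1) od] by blast
    show ?thesis
    proof (cases "t = 0")
      case True
      then have "(2::nat)^al = 2^1" using t gt 2 by simp
      then have "al = 1" by (metis power_inject_exp one_less_numeral_iff semiring_norm(76))
      then show ?thesis using 2 by simp
    next
      case False
      have e: "p^t + 1 = 2^al" using t gt 2 by simp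
      have "t = 1" using lemM[OF p _ e] False by simp
      then have pe: "p = 2^al - 1" using t by simp
      have "al \<ge> 2" proof (rule ccontr)
        assume "\<not> al \<ge> 2" then have "al = 1" using 2 by simp
        then show False using pe p3 by simp
      qed
      then show ?thesis using 2 pe by simp
    qed
  next
    case 3
    have "p dvd p^be" using 3 by (simp add: dvd_power)
    then have nd: "\<not> p dvd (p^be - 1)" using gt p3 3 dvd_sub1[of p "p^be"] by simp
    have g3: "good p (p^be - 1)" using g 3 by simp
    obtain s where s: "p^be - 1 = 2^s" using good_ndvd[OF g3 nd] by blast
    have e: "p^be = 2^s + 1" using s gt 3 by simp
    have "be = 1 \<or> (p = 3 \<and> be = 2 \<and> s = 3)" using lemF[OF p _ e] 3 by simp
    moreover have "be = 1 \<Longrightarrow> s \<ge> 1" using e p3 by (cases s) auto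
    ultimately consider "be = 1" "s \<ge> 1" | "p = 3" "be = 2" by blast
    then show ?thesis
    proof cases
      case 1 then show ?thesis using \<open>al = 0\<close> e by auto
    next
      case 2 then show ?thesis using \<open>al = 0\<close> by simp
    qed
  next
    case 4 then show ?thesis using gt by simp
  qed
qed


lemma NB:
  assumes p: "prime p" "odd p" and g: "good p (2^al - p^de)" and lt: "p^de < (2::nat)^al" and d: "de \<ge> 1"
  shows "de = 1 \<and> al \<ge> 2 \<and> p = 2^al - 1"
proof -
  have p3: "p \<ge> 3" using p p_ge3 by blast
  define n where "n = 2^al - p^de"
  have sum: "2^al = n + p^de" using lt unfolding n_def by simp
  have a1: "al \<ge> 1" proof (rule ccontr)
    assume "\<not> al \<ge> 1" then have "al = 0" by simp
    then show False using lt p3 by simp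
  qed
  have "even ((2::nat)^al)" using a1 by simp
  moreover have "odd (p^de)" using p by simp
  ultimately have od: "odd n" using sum by (metis even_add)
  have nd: "\<not> p dvd n"
  proof
    assume "p dvd n"
    moreover have "p dvd p^de" using d by (simp add: dvd_power)
    ultimately have "p dvd 2^al" using sum by (metis dvd_add)
    then have "p dvd 2" using p prime_dvd_power by blast
    then have "p \<le> 2" by (simp add: dvd_imp_le)
    then show False using p3 by simp
  qed
  have "n = 1" using good_one[OF g[folded n_def] p(1) od nd] .
  then have e: "p^de + 1 = 2^al" using sum by simp
  then have "de = 1" using lemM[OF p d e] by simp
  then have pe: "p = 2^al - 1" using e by simp
  have "al \<ge> 2" proof (rule ccontr)
    assume "\<not> al \<ge> 2" then have "al = 1" using a1 by simp
    then show False using pe p3 by simp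
  qed
  then show ?thesis using pe \<open>de = 1\<close> by simp
qed

lemma NC:
  assumes p: "prime p" "odd p" and g: "good p (p^be - 2^ga)" and lt: "(2::nat)^ga < p^be" and ga: "ga \<ge> 1"
  shows "(be = 1 \<and> p = 2^ga + 1) \<or> (p = 3 \<and> be = 2 \<and> ga = 3)"
proof -
  have p3: "p \<ge> 3" using p p_ge3 by blast
  define n where "n = p^be - 2^ga"
  have sum: "p^be = n + 2^ga" using lt unfolding n_def by simp
  have b1: "be \<ge> 1" proof (rule ccontr)
    assume "\<not> be \<ge> 1" then have "be = 0" by simp
    then show False using lt by simp
  qed
  have "even ((2::nat)^ga)" using ga by simp
  moreover have "odd (p^be)" using p by simp
  ultimately have od: "odd n" using sum by (metis even_add)
  have nd: "\<not> p dvd n"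
  proof
    assume "p dvd n"
    moreover have "p dvd p^be" using b1 by (simp add: dvd_power)
    ultimately have "p dvd 2^ga" using sum by (metis dvd_add_right_iff)
    then have "p dvd 2" using p prime_dvd_power by blast
    then have "p \<le> 2" by (simp add: dvd_imp_le)
    then show False using p3 by simp
  qed
  have "n = 1" using good_one[OF g[folded n_def] p(1) od nd] .
  then have e: "p^be = 2^ga + 1" using sum by simp
  then show ?thesis using lemF[OF p b1 e] by auto
qed


lemma Vmem: "x \<in> V_set p \<longleftrightarrow> (\<exists>a b. b \<ge> 1 \<and> x = 2^a * p^b)"
proof
  assume "x \<in> V_set p"
  then obtain n m where "x = 2^(n-1) * p^m" "n \<ge> 1" "m \<ge> 1" unfolding V_set_def by blast
  then show "\<exists>a b. b \<ge> 1 \<and> x = 2^a * p^b" by blast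
next
  assume "\<exists>a b. b \<ge> 1 \<and> x = 2^a * p^b"
  then obtain a b where "b \<ge> 1" "x = 2^a * p^b" by blast
  then have "x = 2^(Suc a - 1) * p^b \<and> Suc a \<ge> 1 \<and> b \<ge> 1" by simp
  then show "x \<in> V_set p" unfolding V_set_def by blast
qed

lemma A2:
  assumes "x \<ge> 1" "y \<ge> 1"
  shows "A_set {x,y} = {q. prime q \<and> (q dvd x \<or> q dvd y \<or> x mod q = y mod q)}"
proof (intro equalityI subsetI)
  fix q assume "q \<in> A_set {x,y}"
  then obtain k where "prime q" "q dvd x \<or> x mod q = k mod q" "q dvd y \<or> y mod q = k mod q"
    unfolding A_set_def by auto
  then show "q \<in> {q. prime q \<and> (q dvd x \<or> q dvd y \<or> x mod q = y mod q)}" by auto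
next
  fix q assume "q \<in> {q. prime q \<and> (q dvd x \<or> q dvd y \<or> x mod q = y mod q)}"
  then have q: "prime q" "q dvd x \<or> q dvd y \<or> x mod q = y mod q" by auto
  show "q \<in> A_set {x,y}"
  proof (cases "q dvd x")
    case True
    then have "\<forall>e\<in>{x,y}. q dvd e \<or> e mod q = y mod q" by auto
    then show ?thesis unfolding A_set_def using q assms by blast
  next
    case False
    then have "\<forall>e\<in>{x,y}. q dvd e \<or> e mod q = x mod q" using q by auto
    then show ?thesis unfolding A_set_def using q assms by blast
  qed
qed

lemma V_pos: "prime p \<Longrightarrow> x \<in> V_set p \<Longrightarrow> x \<ge> 1"
  unfolding Vmem by (auto simp: prime_gt_0_nat Suc_le_eq)

lemma V_good: "prime p \<Longrightarrow> x \<in> V_set p \<Longrightarrow> good p x"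
  unfolding Vmem using good_pow by blast

lemma V_pdvd: "x \<in> V_set p \<Longrightarrow> p dvd x"
  unfolding Vmem by (auto simp: dvd_power)

lemma Egood:
  assumes p: "prime p" "odd p" and x: "x \<in> V_set p" and y: "y \<in> V_set p" and lt: "y < x"
  shows "A_set {x,y} = {2,p} \<longleftrightarrow> good p (x - y)"
proof -
  have x1: "x \<ge> 1" and y1: "y \<ge> 1" using V_pos p x y by auto
  have A: "A_set {x,y} = {q. prime q \<and> (q dvd x \<or> q dvd y \<or> x mod q = y mod q)}"
    using A2[OF x1 y1] .
  have md: "\<And>q. x mod q = y mod q \<longleftrightarrow> q dvd (x - y)"
    using lt by (metis less_imp_le mod_eq_dvd_iff_nat)
  show ?thesis
  proof
    assume e: "A_set {x,y} = {2,p}"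
    show "good p (x - y)" unfolding good_def
    proof (intro conjI allI impI)
      show "0 < x - y" using lt by simp
    next
      fix q :: nat assume "prime q" "q dvd x - y"
      then have "q \<in> A_set {x,y}" unfolding A using md by auto
      then show "q = 2 \<or> q = p" using e by auto
    qed
  next
    assume g: "good p (x - y)"
    show "A_set {x,y} = {2,p}"
    proof (intro equalityI subsetI)
      fix q assume "q \<in> A_set {x,y}"
      then have q: "prime q" "q dvd x \<or> q dvd y \<or> q dvd (x - y)" unfolding A using md by auto
      have "good p x" "good p y" using V_good p x y by auto
      then show "q \<in> {2,p}" using q g unfolding good_def by auto
    next
      fix q assume "q \<in> {2,p}"
      then consider "q = 2" | "q = p" by auto
      then show "q \<in> A_set {x,y}"
      proof cases
        case 1
        have "2 dvd x \<or> 2 dvd y \<or> x mod 2 = y mod 2" by (metis odd_iff_mod_2_eq_one)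
        then show ?thesis unfolding A 1 by auto
      next
        case 2
        then show ?thesis unfolding A using p V_pdvd[OF x] by auto
      qed
    qed
  qed
qed

lemma Efam_iff:
  assumes p: "prime p" "odd p"
  shows "E \<in> E_fam p \<longleftrightarrow> (\<exists>x y. E = {x,y} \<and> y < x \<and> x \<in> V_set p \<and> y \<in> V_set p \<and> good p (x - y))"
proof
  assume "E \<in> E_fam p"
  then have E: "E \<subseteq> V_set p" "card E = 2" "A_set E = {2,p}" unfolding E_fam_def by auto
  then obtain x y where xy: "E = {x,y}" "x \<noteq> y" by (auto simp: card_2_iff)
  show "\<exists>x y. E = {x,y} \<and> y < x \<and> x \<in> V_set p \<and> y \<in> V_set p \<and> good p (x - y)"
  proof (cases "y < x")
    case True
    then show ?thesis using E xy Egood[OF p, of x y] by auto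
  next
    case False
    then have "x < y" using xy by simp
    moreover have "E = {y,x}" using xy by auto
    ultimately show ?thesis using E Egood[OF p, of y x] by auto
  qed
next
  assume "\<exists>x y. E = {x,y} \<and> y < x \<and> x \<in> V_set p \<and> y \<in> V_set p \<and> good p (x - y)"
  then obtain x y where xy: "E = {x,y}" "y < x" "x \<in> V_set p" "y \<in> V_set p" "good p (x - y)" by blast
  then have "A_set E = {2,p}" using Egood[OF p, of x y] by simp
  moreover have "card E = 2" using xy by simp
  ultimately show "E \<in> E_fam p" unfolding E_fam_def using xy by auto
qed

lemma mkE:
  assumes p: "prime p" "odd p" and X: "X \<in> V_set p" and Y: "Y \<in> V_set p" and e: "X = Y + 2^s * p^t"
  shows "{X,Y} \<in> E_fam p \<and> {Y,X} \<in> E_fam p"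
proof -
  have "0 < 2^s * p^t" using p by (simp add: prime_gt_0_nat)
  then have lt: "Y < X" using e by simp
  have "X - Y = 2^s * p^t" using e by simp
  then have g: "good p (X - Y)" using good_pow p by simp
  have "{X,Y} \<in> E_fam p" unfolding Efam_iff[OF p] using lt X Y g by blast
  moreover have "{Y,X} = {X,Y}" by auto
  ultimately show ?thesis by simp
qed

lemma inV: "prime p \<Longrightarrow> b \<ge> 1 \<Longrightarrow> 2^a * p^b \<in> V_set p"
  unfolding Vmem by blast


lemma classify:
  assumes p: "prime p" "odd p" and E: "E \<in> E_fam p"
  obtains (R2) c d where "d\<ge>1" "E = {2^(c+1)*p^d, 2^c*p^d}"
    | (RM) c d k where "d\<ge>1" "k\<ge>2" "p = 2^k - 1" "E = {2^(c+k)*p^d, 2^c*p^d}"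
    | (RF) c d k where "d\<ge>1" "k\<ge>1" "p = 2^k + 1" "E = {2^c*p^(d+1), 2^c*p^d}"
    | (R9) c d where "d\<ge>1" "p = 3" "E = {2^c*p^(d+2), 2^c*p^d}"
    | (RMb) c d k where "d\<ge>1" "k\<ge>2" "p = 2^k - 1" "E = {2^(c+k)*p^d, 2^c*p^(d+1)}"
    | (RFb) c d k where "d\<ge>1" "k\<ge>1" "p = 2^k + 1" "E = {2^c*p^(d+1), 2^(c+k)*p^d}"
    | (R98) c d where "d\<ge>1" "p = 3" "E = {2^c*p^(d+2), 2^(c+3)*p^d}"
proof -
  have p3: "p \<ge> 3" using p p_ge3 by blast
  obtain x y where xy: "E = {x,y}" "y < x" "x \<in> V_set p" "y \<in> V_set p" "good p (x - y)"
    using E Efam_iff[OF p] by blast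
  obtain a b where ab: "b \<ge> 1" "x = 2^a * p^b" using xy(3) Vmem by blast
  obtain c d where cd: "d \<ge> 1" "y = 2^c * p^d" using xy(4) Vmem by blast
  have g: "good p (x - y)" by fact
  have pp: "p > 0" using p3 by simp
  consider "c \<le> a" "d \<le> b" | "c \<le> a" "b < d" | "a < c" "d \<le> b" | "a < c" "b < d" by linarith
  then show ?thesis
  proof cases
    case 1
    define al where "al = a - c"
    define be where "be = b - d"
    have xe: "x = (2^c*p^d) * (2^al*p^be)" using 1 ab unfolding al_def be_def
      by (simp add: power_add[symmetric] algebra_simps)
    have ye: "y = (2^c*p^d) * 1" using cd by simp
    have "x - y = (2^c*p^d) * (2^al*p^be - 1)" using xe ye by (simp add: diff_mult_distrib2)
    then have g1: "good p (2^al*p^be - 1)" using good_dvd[OF g] by (metis dvd_triv_right)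
    have gt: "2^al*p^be > (1::nat)"
    proof (rule ccontr)
      assume "\<not> 2^al*p^be > (1::nat)"
      then have "2^al*p^be \<le> (1::nat)" by simp
      then have "x \<le> y" using xe ye by (metis mult_le_mono2)
      then show False using xy by simp
    qed
    from NA[OF p g1 gt] consider "al=1" "be=0" | "be=0" "al \<ge> 2" "p = 2^al - 1"
      | "al=0" "be=1" "\<exists>k\<ge>1. p = 2^k+1" | "al=0" "be=2" "p=3" by blast
    then show ?thesis
    proof cases
      case 1
      then have "a = c+1" "b = d" using \<open>c \<le> a\<close> \<open>d \<le> b\<close> unfolding al_def be_def by auto
      then have "E = {2^(c+1)*p^d, 2^c*p^d}" using xy ab cd by simp
      then show ?thesis using cd by (intro that(1)[where c=c and d=d])
    next
      case 2
      then have "a = c+al" "b = d" using \<open>c \<le> a\<close> \<open>d \<le> b\<close> unfolding al_def be_def by auto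
      then have "E = {2^(c+al)*p^d, 2^c*p^d}" using xy ab cd by simp
      then show ?thesis using cd 2 by (intro that(2)[where c=c and d=d and k=al])
    next
      case 3
      then have "a = c" "b = d+1" using \<open>c \<le> a\<close> \<open>d \<le> b\<close> unfolding al_def be_def by auto
      then have E3: "E = {2^c*p^(d+1), 2^c*p^d}" using xy ab cd by simp
      obtain k where "k \<ge> 1" "p = 2^k+1" using 3 by blast
      then show ?thesis using cd E3 by (intro that(3)[where c=c and d=d and k=k])
    next
      case 4
      then have "a = c" "b = d+2" using \<open>c \<le> a\<close> \<open>d \<le> b\<close> unfolding al_def be_def by auto
      then have "E = {2^c*p^(d+2), 2^c*p^d}" using xy ab cd by simp
      then show ?thesis using cd 4 by (intro that(4)[where c=c and d=d])
    qed
  next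
    case 2
    define al where "al = a - c"
    define de where "de = d - b"
    have xe: "x = (2^c*p^b) * 2^al" using 2 ab unfolding al_def
      by (simp add: power_add[symmetric] algebra_simps)
    have ye: "y = (2^c*p^b) * p^de" using 2 cd unfolding de_def
      by (simp add: power_add[symmetric] algebra_simps)
    have "x - y = (2^c*p^b) * (2^al - p^de)" using xe ye by (simp add: diff_mult_distrib2)
    then have g1: "good p (2^al - p^de)" using good_dvd[OF g] by (metis dvd_triv_right)
    have lt: "p^de < (2::nat)^al"
    proof (rule ccontr)
      assume "\<not> p^de < (2::nat)^al"
      then have "2^al \<le> p^de" by simp
      then have "x \<le> y" using xe ye by (metis mult_le_mono2)
      then show False using xy by simp
    qed
    have d1: "de \<ge> 1" using 2 unfolding de_def by simp
    from NB[OF p g1 lt d1] have "de = 1" "al \<ge> 2" "p = 2^al - 1" by auto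
    moreover have "a = c + al" "d = b + 1" using 2 \<open>de = 1\<close> unfolding al_def de_def by auto
    ultimately have "E = {2^(c+al)*p^b, 2^c*p^(b+1)}" "al \<ge> 2" "p = 2^al - 1" using xy ab cd by auto
    then show ?thesis using ab by (intro that(5)[where c=c and d=b and k=al])
  next
    case 3
    define ga where "ga = c - a"
    define be where "be = b - d"
    have xe: "x = (2^a*p^d) * p^be" using 3 ab unfolding be_def
      by (simp add: power_add[symmetric] algebra_simps)
    have ye: "y = (2^a*p^d) * 2^ga" using 3 cd unfolding ga_def
      by (simp add: power_add[symmetric] algebra_simps)
    have "x - y = (2^a*p^d) * (p^be - 2^ga)" using xe ye by (simp add: diff_mult_distrib2)
    then have g1: "good p (p^be - 2^ga)" using good_dvd[OF g] by (metis dvd_triv_right)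
    have lt: "(2::nat)^ga < p^be"
    proof (rule ccontr)
      assume "\<not> (2::nat)^ga < p^be"
      then have "p^be \<le> (2::nat)^ga" by simp
      then have "x \<le> y" using xe ye by (metis mult_le_mono2)
      then show False using xy by simp
    qed
    have g1': "ga \<ge> 1" using 3 unfolding ga_def by simp
    from NC[OF p g1 lt g1'] consider "be = 1" "p = 2^ga + 1" | "p = 3" "be = 2" "ga = 3" by blast
    then show ?thesis
    proof cases
      case 1
      then have "c = a + ga" "b = d + 1" using 3 unfolding ga_def be_def by auto
      then have "E = {2^a*p^(d+1), 2^(a+ga)*p^d}" using xy ab cd by simp
      then show ?thesis using cd 1 g1' by (intro that(6)[where c=a and d=d and k=ga])
    next
      case 2
      then have "c = a + 3" "b = d + 2" using 3 unfolding ga_def be_def by auto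
      then have "E = {2^a*p^(d+2), 2^(a+3)*p^d}" using xy ab cd by simp
      then show ?thesis using cd 2 by (intro that(7)[where c=a and d=d])
    qed
  next
    case 4
    have "(2::nat)^a < 2^c" using 4 by simp
    moreover have "p^b < p^d" using 4 p3 by simp
    ultimately have "x < y" using ab cd by (simp add: mult_strict_mono)
    then show ?thesis using xy by simp
  qed
qed

lemma pow2_inj: "(2::nat)^k = 2^j \<Longrightarrow> k = j"
  by (simp add: power_inject_exp)

lemma FM_clash: "p = 2^k - 1 \<Longrightarrow> p = 2^m + (1::nat) \<Longrightarrow> p = 3"
proof -
  assume a: "p = 2^k - 1" "p = 2^m + (1::nat)"
  have "(2::nat)^k \<ge> 1" by simp
  then have "(2::nat)^m + 2 = 2^k" using a by linarith
  then have "m = 1" using two_pows_diff2 by blast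
  then show "p = 3" using a by simp
qed


lemma mkE': "prime p \<Longrightarrow> odd p \<Longrightarrow> j \<ge> 1 \<Longrightarrow> l \<ge> 1 \<Longrightarrow> 2^i*p^j = 2^k*p^l + 2^s*p^t \<Longrightarrow>
  {2^i*p^j, 2^k*p^l} \<in> E_fam p \<and> {2^k*p^l, 2^i*p^j} \<in> E_fam p"
  by (rule mkE[OF _ _ inV inV]) auto

lemma memF: "E = f a b \<Longrightarrow> P a b \<Longrightarrow> E \<in> {f a b | a b. P a b}" by blast

lemma part1:
  "E_fam 3 =
       {{2^(a-1)*3^b, 2^(a-1)*3^(b+1)} | a b. a \<ge> 1 \<and> b \<ge> 1}
     \<union> {{2^(a-1)*3^b, 2^(a-1)*3^(b+2)} | a b. a \<ge> 1 \<and> b \<ge> 1}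
     \<union> {{2^(a-1)*3^b, 2^a*3^b} | a b. a \<ge> 1 \<and> b \<ge> 1}
     \<union> {{2^(a-1)*3^b, 2^(a+1)*3^b} | a b. a \<ge> 1 \<and> b \<ge> 1}
     \<union> {{2^(a-1)*3^(b+1), 2^(a+1)*3^b} | a b. a \<ge> 1 \<and> b \<ge> 1}
     \<union> {{2^a*3^b, 2^(a-1)*3^(b+1)} | a b. a \<ge> 1 \<and> b \<ge> 1}
     \<union> {{2^(a+2)*3^b, 2^(a-1)*3^(b+2)} | a b. a \<ge> 1 \<and> b \<ge> 1}"
  (is "_ = ?F1 \<union> ?F2 \<union> ?F3 \<union> ?F4 \<union> ?F5 \<union> ?F6 \<union> ?F7")
proof (intro equalityI subsetI)
  have p: "prime (3::nat)" "odd (3::nat)" by auto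
  fix E assume E: "E \<in> E_fam 3"
  show "E \<in> ?F1 \<union> ?F2 \<union> ?F3 \<union> ?F4 \<union> ?F5 \<union> ?F6 \<union> ?F7"
  proof (cases rule: classify[OF p E, case_names R2 RM RF R9 RMb RFb R98])
    case (R2 c d)
    have "E \<in> ?F3" using R2 by (intro memF[where a="c+1" and b=d]) (auto simp: insert_commute power_add)
    then show ?thesis by blast
  next
    case (RM c d k)
    have "(2::nat)^k = 2^2" using RM by simp
    then have "k = 2" using pow2_inj by blast
    have "E \<in> ?F4" using RM \<open>k = 2\<close> by (intro memF[where a="c+1" and b=d]) (auto simp: insert_commute power_add)
    then show ?thesis by blast
  next
    case (RF c d k)
    have "(2::nat)^k = 2^1" using RF by simp
    then have "k = 1" using pow2_inj by blast
    have "E \<in> ?F1" using RF \<open>k = 1\<close> by (intro memF[where a="c+1" and b=d]) (auto simp: insert_commute power_add)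
    then show ?thesis by blast
  next
    case (R9 c d)
    have "E \<in> ?F2" using R9 by (intro memF[where a="c+1" and b=d]) (auto simp: insert_commute power_add)
    then show ?thesis by blast
  next
    case (RMb c d k)
    have "(2::nat)^k = 2^2" using RMb by simp
    then have "k = 2" using pow2_inj by blast
    have "E \<in> ?F5" using RMb \<open>k = 2\<close> by (intro memF[where a="c+1" and b=d]) (auto simp: insert_commute power_add)
    then show ?thesis by blast
  next
    case (RFb c d k)
    have "(2::nat)^k = 2^1" using RFb by simp
    then have "k = 1" using pow2_inj by blast
    have "E \<in> ?F6" using RFb \<open>k = 1\<close> by (intro memF[where a="c+1" and b=d]) (auto simp: insert_commute power_add)
    then show ?thesis by blast
  next
    case (R98 c d)
    have "E \<in> ?F7" using R98 by (intro memF[where a="c+1" and b=d]) (auto simp: insert_commute power_add)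
    then show ?thesis by blast
  qed
next
  have p: "prime (3::nat)" "odd (3::nat)" by auto
  fix E assume "E \<in> ?F1 \<union> ?F2 \<union> ?F3 \<union> ?F4 \<union> ?F5 \<union> ?F6 \<union> ?F7"
  then consider "E \<in> ?F1" | "E \<in> ?F2" | "E \<in> ?F3" | "E \<in> ?F4" | "E \<in> ?F5" | "E \<in> ?F6" | "E \<in> ?F7" by blast
  then show "E \<in> E_fam 3"
  proof cases
    case 1
    then obtain a b where E: "E = {2^(a-1)*3^b, 2^(a-1)*3^(b+1)}" "a \<ge> 1" "b \<ge> 1" by blast
    have eq: "2^(a-1)*3^(b+1) = 2^(a-1)*3^b + 2^a*(3::nat)^b" using E(2) by (cases a) (simp_all add: algebra_simps)
    show ?thesis using mkE'[OF p _ _ eq] E by simp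
  next
    case 2
    then obtain a b where E: "E = {2^(a-1)*3^b, 2^(a-1)*3^(b+2)}" "a \<ge> 1" "b \<ge> 1" by blast
    have eq: "2^(a-1)*3^(b+2) = 2^(a-1)*3^b + 2^(a+2)*(3::nat)^b" using E(2) by (cases a) (simp_all add: algebra_simps)
    show ?thesis using mkE'[OF p _ _ eq] E by simp
  next
    case 3
    then obtain a b where E: "E = {2^(a-1)*3^b, 2^a*3^b}" "a \<ge> 1" "b \<ge> 1" by blast
    have eq: "2^a*3^b = 2^(a-1)*3^b + 2^(a-1)*(3::nat)^b" using E(2) by (cases a) (simp_all add: algebra_simps)
    show ?thesis using mkE'[OF p _ _ eq] E by simp
  next
    case 4
    then obtain a b where E: "E = {2^(a-1)*3^b, 2^(a+1)*3^b}" "a \<ge> 1" "b \<ge> 1" by blast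
    have eq: "2^(a+1)*3^b = 2^(a-1)*3^b + 2^(a-1)*(3::nat)^(b+1)" using E(2) by (cases a) (simp_all add: algebra_simps)
    show ?thesis using mkE'[OF p _ _ eq] E by simp
  next
    case 5
    then obtain a b where E: "E = {2^(a-1)*3^(b+1), 2^(a+1)*3^b}" "a \<ge> 1" "b \<ge> 1" by blast
    have eq: "2^(a+1)*3^b = 2^(a-1)*3^(b+1) + 2^(a-1)*(3::nat)^b" using E(2) by (cases a) (simp_all add: algebra_simps)
    show ?thesis using mkE'[OF p _ _ eq] E by simp
  next
    case 6
    then obtain a b where E: "E = {2^a*3^b, 2^(a-1)*3^(b+1)}" "a \<ge> 1" "b \<ge> 1" by blast
    have eq: "2^(a-1)*3^(b+1) = 2^a*3^b + 2^(a-1)*(3::nat)^b" using E(2) by (cases a) (simp_all add: algebra_simps)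
    show ?thesis using mkE'[OF p _ _ eq] E by simp
  next
    case 7
    then obtain a b where E: "E = {2^(a+2)*3^b, 2^(a-1)*3^(b+2)}" "a \<ge> 1" "b \<ge> 1" by blast
    have eq: "2^(a-1)*3^(b+2) = 2^(a+2)*3^b + 2^(a-1)*(3::nat)^b" using E(2) by (cases a) (simp_all add: algebra_simps)
    show ?thesis using mkE'[OF p _ _ eq] E by simp
  qed
qed

lemma part2:
  assumes p: "prime p" "odd p" and m: "m \<ge> 1" "p = 2^m + 1" "p > 3"
  shows "E_fam p =
       {{2^(a-1)*p^b, 2^(a-1)*p^(b+1)} | a b. a \<ge> 1 \<and> b \<ge> 1}
     \<union> {{2^(a-1)*p^b, 2^a*p^b} | a b. a \<ge> 1 \<and> b \<ge> 1}
     \<union> {{2^(m+a-1)*p^b, 2^(a-1)*p^(b+1)} | a b. a \<ge> 1 \<and> b \<ge> 1}"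
  (is "_ = ?F1 \<union> ?F2 \<union> ?F3")
proof (intro equalityI subsetI)
  fix E assume E: "E \<in> E_fam p"
  show "E \<in> ?F1 \<union> ?F2 \<union> ?F3"
  proof (cases rule: classify[OF p E, case_names R2 RM RF R9 RMb RFb R98])
    case (R2 c d)
    have "E \<in> ?F2" using R2 by (intro memF[where a="c+1" and b=d]) (auto simp: insert_commute)
    then show ?thesis by blast
  next
    case (RM c d k)
    then have "p = 3" using FM_clash m by blast
    then show ?thesis using m by simp
  next
    case (RF c d k)
    then have "(2::nat)^k = 2^m" using m by simp
    then have "k = m" using pow2_inj by blast
    have "E \<in> ?F1" using RF \<open>k = m\<close> by (intro memF[where a="c+1" and b=d]) (auto simp: insert_commute)
    then show ?thesis by blast
  next
    case (R9 c d)
    then show ?thesis using m by simp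
  next
    case (RMb c d k)
    then have "p = 3" using FM_clash m by blast
    then show ?thesis using m by simp
  next
    case (RFb c d k)
    then have "(2::nat)^k = 2^m" using m by simp
    then have "k = m" using pow2_inj by blast
    have "E \<in> ?F3" using RFb \<open>k = m\<close> by (intro memF[where a="c+1" and b=d]) (auto simp: insert_commute add.commute)
    then show ?thesis by blast
  next
    case (R98 c d)
    then show ?thesis using m by simp
  qed
next
  fix E assume "E \<in> ?F1 \<union> ?F2 \<union> ?F3"
  then consider "E \<in> ?F1" | "E \<in> ?F2" | "E \<in> ?F3" by blast
  then show "E \<in> E_fam p"
  proof cases
    case 1
    then obtain a b where E: "E = {2^(a-1)*p^b, 2^(a-1)*p^(b+1)}" "a \<ge> 1" "b \<ge> 1" by blast
    have pb: "p^(b+1) = p^b*2^m + p^b" using m by simp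
    have pa: "(2::nat)^(m+a-1) = 2^m*2^(a-1)" using E(2) by (simp add: power_add[symmetric])
    have eq: "2^(a-1)*p^(b+1) = 2^(a-1)*p^b + 2^(m+a-1)*p^b" unfolding pb pa by (simp add: algebra_simps)
    show ?thesis using mkE'[OF p _ _ eq] E by simp
  next
    case 2
    then obtain a b where E: "E = {2^(a-1)*p^b, 2^a*p^b}" "a \<ge> 1" "b \<ge> 1" by blast
    have eq: "2^a*p^b = 2^(a-1)*p^b + 2^(a-1)*p^b" using E(2) by (cases a) (simp_all add: algebra_simps)
    show ?thesis using mkE'[OF p _ _ eq] E by simp
  next
    case 3
    then obtain a b where E: "E = {2^(m+a-1)*p^b, 2^(a-1)*p^(b+1)}" "a \<ge> 1" "b \<ge> 1" by blast
    have pb: "p^(b+1) = p^b*2^m + p^b" using m by simp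
    have pa: "(2::nat)^(m+a-1) = 2^m*2^(a-1)" using E(2) by (simp add: power_add[symmetric])
    have eq: "2^(a-1)*p^(b+1) = 2^(m+a-1)*p^b + 2^(a-1)*p^b" unfolding pb pa by (simp add: algebra_simps)
    show ?thesis using mkE'[OF p _ _ eq] E by simp
  qed
qed

lemma part3:
  assumes p: "prime p" "odd p" and m: "m \<ge> 1" "p = 2^m - 1" "p > 3"
  shows "E_fam p =
       {{2^(a-1)*p^b, 2^a*p^b} | a b. a \<ge> 1 \<and> b \<ge> 1}
     \<union> {{2^(a-1)*p^b, 2^(m+a-1)*p^b} | a b. a \<ge> 1 \<and> b \<ge> 1}
     \<union> {{2^(a-1)*p^(b+1), 2^(m+a-1)*p^b} | a b. a \<ge> 1 \<and> b \<ge> 1}"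
  (is "_ = ?F1 \<union> ?F2 \<union> ?F3")
proof (intro equalityI subsetI)
  have hm: "(2::nat)^m = p + 1" using m by (metis le_add_diff_inverse2 one_le_numeral one_le_power)
  fix E assume E: "E \<in> E_fam p"
  show "E \<in> ?F1 \<union> ?F2 \<union> ?F3"
  proof (cases rule: classify[OF p E, case_names R2 RM RF R9 RMb RFb R98])
    case (R2 c d)
    have "E \<in> ?F1" using R2 by (intro memF[where a="c+1" and b=d]) (auto simp: insert_commute)
    then show ?thesis by blast
  next
    case (RM c d k)
    have "(2::nat)^k \<ge> 1" by simp
    then have "(2::nat)^k = 2^m" using RM hm by linarith
    then have "k = m" using pow2_inj by blast
    have "E \<in> ?F2" using RM \<open>k = m\<close> by (intro memF[where a="c+1" and b=d]) (auto simp: insert_commute add.commute)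
    then show ?thesis by blast
  next
    case (RF c d k)
    then have "p = 3" using FM_clash m by blast
    then show ?thesis using m by simp
  next
    case (R9 c d)
    then show ?thesis using m by simp
  next
    case (RMb c d k)
    have "(2::nat)^k \<ge> 1" by simp
    then have "(2::nat)^k = 2^m" using RMb hm by linarith
    then have "k = m" using pow2_inj by blast
    have "E \<in> ?F3" using RMb \<open>k = m\<close> by (intro memF[where a="c+1" and b=d]) (auto simp: insert_commute add.commute)
    then show ?thesis by blast
  next
    case (RFb c d k)
    then have "p = 3" using FM_clash m by blast
    then show ?thesis using m by simp
  next
    case (R98 c d)
    then show ?thesis using m by simp
  qed
next
  have hm: "(2::nat)^m = p + 1" using m by (metis le_add_diff_inverse2 one_le_numeral one_le_power)
  fix E assume "E \<in> ?F1 \<union> ?F2 \<union> ?F3"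
  then consider "E \<in> ?F1" | "E \<in> ?F2" | "E \<in> ?F3" by blast
  then show "E \<in> E_fam p"
  proof cases
    case 1
    then obtain a b where E: "E = {2^(a-1)*p^b, 2^a*p^b}" "a \<ge> 1" "b \<ge> 1" by blast
    have eq: "2^a*p^b = 2^(a-1)*p^b + 2^(a-1)*p^b" using E(2) by (cases a) (simp_all add: algebra_simps)
    show ?thesis using mkE'[OF p _ _ eq] E by simp
  next
    case 2
    then obtain a b where E: "E = {2^(a-1)*p^b, 2^(m+a-1)*p^b}" "a \<ge> 1" "b \<ge> 1" by blast
    have "(2::nat)^(m+a-1) = 2^m*2^(a-1)" using E(2) by (simp add: power_add[symmetric])
    then have pa: "(2::nat)^(m+a-1) = (p+1)*2^(a-1)" using hm by simp
    have eq: "2^(m+a-1)*p^b = 2^(a-1)*p^b + 2^(a-1)*p^(b+1)" unfolding pa by (simp add: algebra_simps)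
    show ?thesis using mkE'[OF p _ _ eq] E by simp
  next
    case 3
    then obtain a b where E: "E = {2^(a-1)*p^(b+1), 2^(m+a-1)*p^b}" "a \<ge> 1" "b \<ge> 1" by blast
    have "(2::nat)^(m+a-1) = 2^m*2^(a-1)" using E(2) by (simp add: power_add[symmetric])
    then have pa: "(2::nat)^(m+a-1) = (p+1)*2^(a-1)" using hm by simp
    have eq: "2^(m+a-1)*p^b = 2^(a-1)*p^(b+1) + 2^(a-1)*p^b" unfolding pa by (simp add: algebra_simps)
    show ?thesis using mkE'[OF p _ _ eq] E by simp
  qed
qed

lemma part4:
  assumes p: "prime p" "odd p" and nf: "\<not> fermat_prime p" and nm: "\<not> mersenne_prime p"
  shows "E_fam p = {{2^a*p^b, 2^(a-1)*p^b} | a b. a \<ge> 1 \<and> b \<ge> 1}"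
  (is "_ = ?F")
proof (intro equalityI subsetI)
  have f3: "p \<noteq> 3" using nf p unfolding fermat_prime_def by (metis One_nat_def le_refl power_one_right numeral_3_eq_3 Suc_1 plus_1_eq_Suc add.commute)
  fix E assume E: "E \<in> E_fam p"
  show "E \<in> ?F"
  proof (cases rule: classify[OF p E, case_names R2 RM RF R9 RMb RFb R98])
    case (R2 c d)
    show ?thesis using R2 by (intro memF[where a="c+1" and b=d]) (auto simp: insert_commute)
  next
    case (RM c d k)
    then have "mersenne_prime p" using p unfolding mersenne_prime_def by (intro conjI exI[of _ k]) auto
    then show ?thesis using nm by simp
  next
    case (RF c d k)
    then have "fermat_prime p" using p unfolding fermat_prime_def by (intro conjI exI[of _ k]) auto
    then show ?thesis using nf by simp
  next
    case (R9 c d)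
    then show ?thesis using f3 by simp
  next
    case (RMb c d k)
    then have "mersenne_prime p" using p unfolding mersenne_prime_def by (intro conjI exI[of _ k]) auto
    then show ?thesis using nm by simp
  next
    case (RFb c d k)
    then have "fermat_prime p" using p unfolding fermat_prime_def by (intro conjI exI[of _ k]) auto
    then show ?thesis using nf by simp
  next
    case (R98 c d)
    then show ?thesis using f3 by simp
  qed
next
  fix E assume "E \<in> ?F"
  then obtain a b where E: "E = {2^a*p^b, 2^(a-1)*p^b}" "a \<ge> 1" "b \<ge> 1" by blast
  have eq: "2^a*p^b = 2^(a-1)*p^b + 2^(a-1)*p^b" using E(2) by (cases a) (simp_all add: algebra_simps)
  show "E \<in> E_fam p" using mkE'[OF p _ _ eq] E by simp
qed

theorem lemma3p18:
  fixes p :: nat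
  assumes "prime p" and "odd p"
  shows
   "(p = 3 \<longrightarrow> E_fam 3 =
       {{2^(a-1)*3^b, 2^(a-1)*3^(b+1)} | a b. a \<ge> 1 \<and> b \<ge> 1}
     \<union> {{2^(a-1)*3^b, 2^(a-1)*3^(b+2)} | a b. a \<ge> 1 \<and> b \<ge> 1}
     \<union> {{2^(a-1)*3^b, 2^a*3^b} | a b. a \<ge> 1 \<and> b \<ge> 1}
     \<union> {{2^(a-1)*3^b, 2^(a+1)*3^b} | a b. a \<ge> 1 \<and> b \<ge> 1}
     \<union> {{2^(a-1)*3^(b+1), 2^(a+1)*3^b} | a b. a \<ge> 1 \<and> b \<ge> 1}
     \<union> {{2^a*3^b, 2^(a-1)*3^(b+1)} | a b. a \<ge> 1 \<and> b \<ge> 1}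
     \<union> {{2^(a+2)*3^b, 2^(a-1)*3^(b+2)} | a b. a \<ge> 1 \<and> b \<ge> 1})
  \<and> (\<forall>m::nat. m \<ge> 1 \<and> p = 2^m + 1 \<and> p > 3 \<longrightarrow> E_fam p =
       {{2^(a-1)*p^b, 2^(a-1)*p^(b+1)} | a b. a \<ge> 1 \<and> b \<ge> 1}
     \<union> {{2^(a-1)*p^b, 2^a*p^b} | a b. a \<ge> 1 \<and> b \<ge> 1}
     \<union> {{2^(m+a-1)*p^b, 2^(a-1)*p^(b+1)} | a b. a \<ge> 1 \<and> b \<ge> 1})
  \<and> (\<forall>m::nat. m \<ge> 1 \<and> p = 2^m - 1 \<and> p > 3 \<longrightarrow> E_fam p =
       {{2^(a-1)*p^b, 2^a*p^b} | a b. a \<ge> 1 \<and> b \<ge> 1}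
     \<union> {{2^(a-1)*p^b, 2^(m+a-1)*p^b} | a b. a \<ge> 1 \<and> b \<ge> 1}
     \<union> {{2^(a-1)*p^(b+1), 2^(m+a-1)*p^b} | a b. a \<ge> 1 \<and> b \<ge> 1})
  \<and> (\<not> fermat_prime p \<and> \<not> mersenne_prime p \<longrightarrow> E_fam p =
       {{2^a*p^b, 2^(a-1)*p^b} | a b. a \<ge> 1 \<and> b \<ge> 1})"
  apply (intro conjI)
  subgoal by (intro impI) (rule part1)
  subgoal by (intro allI impI, elim conjE, rule part2[OF assms])
  subgoal by (intro allI impI, elim conjE, rule part3[OF assms])
  subgoal by (intro impI, elim conjE, rule part4[OF assms])
  done

end
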